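(* Let $(X,\|\cdot,\cdot\|)$ be a $2$-normed space, $f:X\to X$, and $x_0\in X$. Suppose that for every sequence $(x_n)$ in $X$ which statistically converges to $x_0$, the sequence $(f(x_n))$ converges to $f(x_0)$. Then $f$ is a constant function.
   Context: A $2$-normed space is a real linear space $X$ with $\dim X>1$ together with a function $\|\cdot,\cdot\|:X^2\to\mathbb{R}$ such that for all $x,y,z\in X$, $\alpha\in\mathbb{R}$: (1) $\|x,y\|=0$ iff $x,y$ are linearly dependent; (2) $\|x,y\|=\|y,x\|$; (3) $\|\alpha x,y\|=|\alpha|\|x,y\|$; (4) $\|x,y+z\|\le\|x,y\|+\|x,z\|$. A sequence $(x_n)$ in $X$ converges to $x\in X$ if $\lim_{n\to\infty}\|x_n-x,z\|=0$ for every $z\in X$. A sequence $(x_k)$ in $X$ statistically converges to $L\in X$ if for every $\epsilon>0$ and every $z\in X$, $\lim_{n\to\infty}\frac1n|\{k\le n:\|x_k-L,z\|\ge\epsilon\}|=0$. *)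

theory Defs
  imports Complex_Main
begin

definition lin_dep2 :: "'a::real_vector \<Rightarrow> 'a \<Rightarrow> bool" where
  "lin_dep2 x y \<longleftrightarrow> (\<exists>a b::real. (a \<noteq> 0 \<or> b \<noteq> 0) \<and> a *\<^sub>R x + b *\<^sub>R y = 0)"

text \<open>A 2-norm on the real vector space 'a (the carrier X is the whole type), with dim X > 1.\<close>
definition two_normed_space :: "('a::real_vector \<Rightarrow> 'a \<Rightarrow> real) \<Rightarrow> bool" where
  "two_normed_space N \<longleftrightarrow>
     (\<exists>x y::'a. \<not> lin_dep2 x y) \<and>
     (\<forall>x y. N x y = 0 \<longleftrightarrow> lin_dep2 x y) \<and>
     (\<forall>x y. N x y = N y x) \<and>
     (\<forall>x y (\<alpha>::real). N (\<alpha> *\<^sub>R x) y = \<bar>\<alpha>\<bar> * N x y) \<and>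
     (\<forall>x y z. N x (y + z) \<le> N x y + N x z)"

definition conv2 :: "('a::real_vector \<Rightarrow> 'a \<Rightarrow> real) \<Rightarrow> (nat \<Rightarrow> 'a) \<Rightarrow> 'a \<Rightarrow> bool" where
  "conv2 N x L \<longleftrightarrow> (\<forall>z. (\<lambda>n. N (x n - L) z) \<longlonglongrightarrow> 0)"

text \<open>Statistical convergence (terms indexed from 1: density of {k \<le> n}).\<close>
definition stat_conv2 :: "('a::real_vector \<Rightarrow> 'a \<Rightarrow> real) \<Rightarrow> (nat \<Rightarrow> 'a) \<Rightarrow> 'a \<Rightarrow> bool" where
  "stat_conv2 N x L \<longleftrightarrow> (\<forall>\<epsilon>>0. \<forall>z.
     (\<lambda>n. real (card {k \<in> {1..n}. N (x k - L) z \<ge> \<epsilon>}) / real n) \<longlonglongrightarrow> 0)"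

end

theory Submission
  imports Defs
begin

lemma card_sq_bound:
  "real (card {k \<in> {1..n}. \<exists>m. k = m^2}) \<le> sqrt (real n) + 1"
proof -
  have sub: "{k \<in> {1..n}. \<exists>m. k = m^2} \<subseteq> (\<lambda>m. m^2) ` {..nat \<lfloor>sqrt (real n)\<rfloor>}"
  proof
    fix k assume "k \<in> {k \<in> {1..n}. \<exists>m. k = m^2}"
    then obtain m where k: "k = m^2" "k \<le> n" by auto
    have "real m \<le> sqrt (real n)"
      using k by (intro real_le_rsqrt) (simp flip: of_nat_power)
    then have "m \<le> nat \<lfloor>sqrt (real n)\<rfloor>"
      by (simp add: le_nat_iff le_floor_iff)
    then show "k \<in> (\<lambda>m. m^2) ` {..nat \<lfloor>sqrt (real n)\<rfloor>}" using k by auto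
  qed
  have "card {k \<in> {1..n}. \<exists>m. k = m^2} \<le> card ((\<lambda>m. m^2) ` {..nat \<lfloor>sqrt (real n)\<rfloor>})"
    by (rule card_mono[OF _ sub]) auto
  also have "\<dots> \<le> card {..nat \<lfloor>sqrt (real n)\<rfloor>}" by (rule card_image_le) auto
  also have "\<dots> = nat \<lfloor>sqrt (real n)\<rfloor> + 1" by simp
  finally have "real (card {k \<in> {1..n}. \<exists>m. k = m^2}) \<le> real (nat \<lfloor>sqrt (real n)\<rfloor>) + 1"
    by linarith
  also have "\<dots> \<le> sqrt (real n) + 1"
    using of_int_floor_le[of "sqrt (real n)"] by (simp add: of_nat_nat)
  finally show ?thesis .
qed

lemma sq_density: "(\<lambda>n. real (card {k \<in> {1..n}. \<exists>m. k = m^2}) / real n) \<longlonglongrightarrow> 0"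
proof (rule tendsto_sandwich[of "\<lambda>n. 0" _ _ "\<lambda>n. (sqrt (real n) + 1) / real n"])
  show "\<forall>\<^sub>F n in sequentially. 0 \<le> real (card {k \<in> {1..n}. \<exists>m. k = m^2}) / real n" by simp
  show "\<forall>\<^sub>F n in sequentially. real (card {k \<in> {1..n}. \<exists>m. k = m^2}) / real n \<le> (sqrt (real n) + 1) / real n"
    using card_sq_bound by (auto intro!: always_eventually divide_right_mono)
  show "(\<lambda>n. 0::real) \<longlonglongrightarrow> 0" by simp
  have a: "(\<lambda>n. sqrt (inverse (real n))) \<longlonglongrightarrow> sqrt 0"
    by (intro tendsto_real_sqrt lim_inverse_n)
  have lim0: "(\<lambda>n. sqrt (inverse (real n)) + inverse (real n)) \<longlonglongrightarrow> 0 + 0"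
    using a lim_inverse_n by (intro tendsto_add) auto
  have ev: "sqrt (inverse (real n)) + inverse (real n) = (sqrt (real n) + 1) / real n" if "n > 0" for n
  proof -
    have sq: "sqrt (real n) * sqrt (real n) = real n" by simp
    have pos: "sqrt (real n) > 0" using that by simp
    have "sqrt (real n) / real n = sqrt (real n) / (sqrt (real n) * sqrt (real n))" by (simp only: sq)
    also have "\<dots> = inverse (sqrt (real n))" using pos by (simp add: field_simps)
    finally have "sqrt (real n) / real n = inverse (sqrt (real n))" .
    then have eq: "sqrt (real n) * inverse (real n) = inverse (sqrt (real n))" by (simp add: divide_inverse)
    have "(sqrt (real n) + 1) / real n = sqrt (real n) * inverse (real n) + inverse (real n)"
      by (simp add: divide_inverse distrib_right)
    then show ?thesis by (simp only: eq real_sqrt_inverse)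
  qed
  have evf: "\<forall>\<^sub>F n in sequentially. sqrt (inverse (real n)) + inverse (real n) = (sqrt (real n) + 1) / real n"
    using eventually_gt_at_top[of 0] by eventually_elim (rule ev)
  show "(\<lambda>n. (sqrt (real n) + 1) / real n) \<longlonglongrightarrow> 0"
    using Lim_transform_eventually[OF lim0 evf] by simp
qed

lemma dep_all_zero:
  fixes v :: "'a::real_vector"
  assumes "\<exists>x y::'a::real_vector. \<not> lin_dep2 x y" and "\<forall>z. lin_dep2 v z"
  shows "v = 0"
proof (rule ccontr)
  assume v: "v \<noteq> 0"
  obtain a b :: 'a where ab: "\<not> lin_dep2 a b" using assms(1) by blast
  have mult: "\<exists>t. w = t *\<^sub>R v" for w
  proof -
    obtain p q :: real where pq: "p \<noteq> 0 \<or> q \<noteq> 0" "p *\<^sub>R v + q *\<^sub>R w = 0"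
      using assms(2) unfolding lin_dep2_def by blast
    have q: "q \<noteq> 0" using pq v by auto
    have "q *\<^sub>R w = (- p) *\<^sub>R v" using pq(2)
      by (simp add: eq_neg_iff_add_eq_0 add.commute)
    then have "(1/q) *\<^sub>R (q *\<^sub>R w) = (1/q) *\<^sub>R ((- p) *\<^sub>R v)" by simp
    then have "w = (- p / q) *\<^sub>R v" using q by simp
    then show ?thesis by blast
  qed
  obtain s where s: "a = s *\<^sub>R v" using mult by blast
  obtain t where t: "b = t *\<^sub>R v" using mult by blast
  show False
  proof (cases "s = 0 \<and> t = 0")
    case True
    then have "1 *\<^sub>R a + 0 *\<^sub>R b = 0" using s by simp
    moreover have "(1::real) \<noteq> 0 \<or> (0::real) \<noteq> 0" by simp
    ultimately show False using ab unfolding lin_dep2_def by blast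
  next
    case False
    have "t *\<^sub>R a + (- s) *\<^sub>R b = 0" using s t by (simp add: algebra_simps)
    moreover have "t \<noteq> 0 \<or> - s \<noteq> 0" using False by auto
    ultimately show False using ab unfolding lin_dep2_def by blast
  qed
qed

theorem theorem3p2:
  fixes N :: "'a::real_vector \<Rightarrow> 'a \<Rightarrow> real" and f :: "'a \<Rightarrow> 'a" and x0 :: 'a
  assumes "two_normed_space N"
    and "\<forall>x. stat_conv2 N x x0 \<longrightarrow> conv2 N (\<lambda>n. f (x n)) (f x0)"
  shows "\<exists>c. \<forall>x. f x = c"
proof -
  have N0: "N 0 z = 0" for z
  proof -
    have "lin_dep2 0 z" unfolding lin_dep2_def by (rule exI[of _ 1], rule exI[of _ 0]) simp
    then show ?thesis using assms(1) unfolding two_normed_space_def by blast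
  qed
  have "f y = f x0" for y
  proof -
    define x where "x = (\<lambda>n::nat. if \<exists>m. n = m^2 then y else x0)"
    have "stat_conv2 N x x0"
      unfolding stat_conv2_def
    proof (intro allI impI)
      fix \<epsilon> :: real and z assume e: "\<epsilon> > 0"
      show "(\<lambda>n. real (card {k \<in> {1..n}. N (x k - x0) z \<ge> \<epsilon>}) / real n) \<longlonglongrightarrow> 0"
      proof (rule tendsto_sandwich[of "\<lambda>n. 0" _ _ "\<lambda>n. real (card {k \<in> {1..n}. \<exists>m. k = m^2}) / real n"])
        show "\<forall>\<^sub>F n in sequentially. 0 \<le> real (card {k \<in> {1..n}. N (x k - x0) z \<ge> \<epsilon>}) / real n" by simp
        have "{k \<in> {1..n}. N (x k - x0) z \<ge> \<epsilon>} \<subseteq> {k \<in> {1..n}. \<exists>m. k = m^2}" for n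
          using e N0 unfolding x_def by auto
        then have "card {k \<in> {1..n}. N (x k - x0) z \<ge> \<epsilon>} \<le> card {k \<in> {1..n}. \<exists>m. k = m^2}" for n
          by (intro card_mono) auto
        then show "\<forall>\<^sub>F n in sequentially. real (card {k \<in> {1..n}. N (x k - x0) z \<ge> \<epsilon>}) / real n
            \<le> real (card {k \<in> {1..n}. \<exists>m. k = m^2}) / real n"
          by (auto intro!: always_eventually divide_right_mono)
      qed (simp, fact sq_density)
    qed
    then have c: "conv2 N (\<lambda>n. f (x n)) (f x0)" using assms(2) by blast
    have "\<forall>z. lin_dep2 (f y - f x0) z"
    proof
      fix z
      have lim: "(\<lambda>n. N (f (x n) - f x0) z) \<longlonglongrightarrow> 0" using c unfolding conv2_def by blast
      have sm: "strict_mono (\<lambda>m::nat. m^2)"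
        by (simp add: strict_mono_def power_strict_mono)
      have "(\<lambda>m. N (f (x (m^2)) - f x0) z) \<longlonglongrightarrow> 0"
        using LIMSEQ_subseq_LIMSEQ[OF lim sm] by (simp add: o_def)
      moreover have "(\<lambda>m. N (f (x (m^2)) - f x0) z) = (\<lambda>m. N (f y - f x0) z)"
        unfolding x_def by auto
      ultimately have "N (f y - f x0) z = 0" by (simp add: LIMSEQ_const_iff)
      then show "lin_dep2 (f y - f x0) z" using assms(1) unfolding two_normed_space_def by blast
    qed
    then have "f y - f x0 = 0"
      using dep_all_zero assms(1) unfolding two_normed_space_def by blast
    then show ?thesis by simp
  qed
  then show ?thesis by blast
qed

end
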